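(* Assume the cost $c$ is outcome monotonic. For every classifier $f:\mathcal X\to\{0,1\}$ that accepts at least one point (and for which $\tau(f):=\min_{x: f(x)=1}\ell(x)$ is attained), the outcome threshold classifier $f'(x)=\mathbf 1[\ell(x)\ge \tau(f)]$ satisfies $\mathcal U(f)=\mathcal U(f')$ and $\mathcal B(f)=\mathcal B(f')$.
   Context: Setting: features $x\in\mathcal X$, labels $y\in\{0,1\}$, joint distribution of $(X,Y)$; outcome likelihood $\ell(x)=\Pr[Y=1\mid X=x]>0$ for all $x$. Outcome monotonic cost $c:\mathcal X\times\mathcal X\to\mathbb R_{\ge0}$: for all $x,x',x^*$, (i) $c(x,x')>0$ iff $\ell(x')>\ell(x)$; (ii) $c(x,x^* )>c(x',x^* )>0$ iff $\ell(x^* )>\ell(x')>\ell(x)$; (iii) $c(x,x^* )>c(x,x')>0$ iff $\ell(x^* )>\ell(x')>\ell(x)$. Given a classifier $f:\mathcal X\to\{0,1\}$, an individual with features $x$ has utility $u_x(f,x')=f(x')-c(x,x')$ for moving to $x'$. Best response $\Delta(x)=\Delta(x;f)$: if $f(x)=1$, or if no maximizer $x'$ of $u_x(f,\cdot)$ has $f(x')=1$, then $\Delta(x)=x$; otherwise $\Delta(x)$ is an arbitrary maximizer $x'$ of $u_x(f,\cdot)$ with $f(x')=1$. (Thus an individual with $f(x)=0$ ends up accepted iff some $x'$ with $f(x')=1$ has $c(x,x')\le 1$.) Strategic (institutional) utility: $\mathcal U(f)=\Pr[f(\Delta(X))=Y]$. Individual burden $b_f(x)=\min_{x': f(x')=1}c(x,x')$;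 social burden $\mathcal B(f)=\mathbb E[b_f(X)\mid Y=1]$. All minima appearing are assumed attained. An outcome threshold classifier is $f_\tau(x)=\mathbf 1[\ell(x)\ge\tau]$, $\tau\in[0,1]$. *)

theory Defs
  imports "HOL-Probability.Probability"
begin

text \<open>The outcome likelihood is a (version of the) conditional probability Pr[Y=1 | X=x].\<close>

definition outcome_likelihood ::
  "'w measure \<Rightarrow> 'x measure \<Rightarrow> ('w \<Rightarrow> 'x) \<Rightarrow> ('w \<Rightarrow> bool) \<Rightarrow> ('x \<Rightarrow> real) \<Rightarrow> bool" where
  "outcome_likelihood M S X Y l \<longleftrightarrow>
     l \<in> borel_measurable S \<and>
     (\<forall>A\<in>sets S. measure M {w\<in>space M. X w \<in> A \<and> Y w}
                  = (\<integral>w. indicator A (X w) * l (X w) \<partial>M))"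

definition outcome_monotonic :: "('x \<Rightarrow> real) \<Rightarrow> ('x \<Rightarrow> 'x \<Rightarrow> real) \<Rightarrow> bool" where
  "outcome_monotonic l c \<longleftrightarrow>
     (\<forall>x x'. c x x' \<ge> 0) \<and>
     (\<forall>x x'. c x x' > 0 \<longleftrightarrow> l x' > l x) \<and>
     (\<forall>x x' xs. (c x xs > c x' xs \<and> c x' xs > 0) \<longleftrightarrow> (l xs > l x' \<and> l x' > l x)) \<and>
     (\<forall>x x' xs. (c x xs > c x x' \<and> c x x' > 0) \<longleftrightarrow> (l xs > l x' \<and> l x' > l x))"

definition utility :: "('x \<Rightarrow> 'x \<Rightarrow> real) \<Rightarrow> ('x \<Rightarrow> bool) \<Rightarrow> 'x \<Rightarrow> 'x \<Rightarrow> real" where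
  "utility c f x x' = of_bool (f x') - c x x'"

definition is_maximizer :: "('x \<Rightarrow> 'x \<Rightarrow> real) \<Rightarrow> ('x \<Rightarrow> bool) \<Rightarrow> 'x \<Rightarrow> 'x \<Rightarrow> bool" where
  "is_maximizer c f x x' \<longleftrightarrow> (\<forall>z. utility c f x z \<le> utility c f x x')"

definition best_response :: "('x \<Rightarrow> 'x \<Rightarrow> real) \<Rightarrow> ('x \<Rightarrow> bool) \<Rightarrow> ('x \<Rightarrow> 'x) \<Rightarrow> bool" where
  "best_response c f \<Delta> \<longleftrightarrow>
     (\<forall>x. if f x \<or> \<not> (\<exists>x'. is_maximizer c f x x' \<and> f x')
          then \<Delta> x = x
          else is_maximizer c f x (\<Delta> x) \<and> f (\<Delta> x))"

definition strategic_utility ::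
  "'w measure \<Rightarrow> ('w \<Rightarrow> 'x) \<Rightarrow> ('w \<Rightarrow> bool) \<Rightarrow> ('x \<Rightarrow> bool) \<Rightarrow> ('x \<Rightarrow> 'x) \<Rightarrow> real" where
  "strategic_utility M X Y f \<Delta> = measure M {w\<in>space M. f (\<Delta> (X w)) = Y w}"

definition individual_burden :: "('x \<Rightarrow> 'x \<Rightarrow> real) \<Rightarrow> ('x \<Rightarrow> bool) \<Rightarrow> 'x \<Rightarrow> real" where
  "individual_burden c f x = Inf {c x x' | x'. f x'}"

text \<open>E[b_f(X) | Y = 1] = E[b_f(X) 1{Y=1}] / Pr[Y=1].\<close>
definition social_burden ::
  "'w measure \<Rightarrow> ('w \<Rightarrow> 'x) \<Rightarrow> ('w \<Rightarrow> bool) \<Rightarrow> ('x \<Rightarrow> 'x \<Rightarrow> real) \<Rightarrow> ('x \<Rightarrow> bool) \<Rightarrow> real" where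
  "social_burden M X Y c f =
     (\<integral>w. of_bool (Y w) * individual_burden c f (X w) \<partial>M) / measure M {w\<in>space M. Y w}"

definition threshold_classifier :: "('x \<Rightarrow> real) \<Rightarrow> real \<Rightarrow> 'x \<Rightarrow> bool" where
  "threshold_classifier l t x \<longleftrightarrow> l x \<ge> t"

definition tau :: "('x \<Rightarrow> real) \<Rightarrow> ('x \<Rightarrow> bool) \<Rightarrow> real" where
  "tau l f = Inf (l ` {x. f x})"

end

theory Submission
  imports Defs
begin

lemma key_cost:
  assumes om: "outcome_monotonic l c" and lz: "l z \<ge> l x0"
  shows "c x x0 \<le> c x z"
proof -
  from om have nn: "\<And>a b. c a b \<ge> 0" and p: "\<And>a b. c a b > 0 \<longleftrightarrow> l b > l a"
    and iii: "\<And>a b d. (c a d > c a b \<and> c a b > 0) \<longleftrightarrow> (l d > l b \<and> l b > l a)"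
    unfolding outcome_monotonic_def by blast+
  have n: "\<not> (c x x0 > c x z \<and> c x z > 0)" using iii[of x z x0] lz by auto
  show ?thesis
  proof (cases "c x z > 0")
    case True thus ?thesis using n by auto
  next
    case False
    hence "\<not> l z > l x" using p by auto
    hence "\<not> l x0 > l x" using lz by auto
    hence "c x x0 = 0" using p[of x x0] nn[of x x0] by auto
    thus ?thesis using nn[of x z] by auto
  qed
qed

lemma self_cost:
  assumes om: "outcome_monotonic l c" shows "c x x = 0"
  using om unfolding outcome_monotonic_def by (metis less_irrefl order_le_less)

lemma burden_eq:
  assumes om: "outcome_monotonic l c" and g0: "g x0"
    and gl: "\<And>z. g z \<Longrightarrow> l z \<ge> l x0"
  shows "individual_burden c g x = c x x0"
  unfolding individual_burden_def
proof (rule cInf_eq_minimum)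
  show "c x x0 \<in> {c x x' |x'. g x'}" using g0 by blast
  fix y assume "y \<in> {c x x' |x'. g x'}"
  then obtain z where "y = c x z" "g z" by blast
  thus "c x x0 \<le> y" using key_cost[OF om gl] by auto
qed

lemma accept_iff:
  assumes om: "outcome_monotonic l c" and g0: "g x0"
    and gl: "\<And>z. g z \<Longrightarrow> l z \<ge> l x0" and br: "best_response c g D"
  shows "g (D x) \<longleftrightarrow> c x x0 \<le> 1"
proof -
  have nn: "\<And>a b. c a b \<ge> 0" using om unfolding outcome_monotonic_def by blast
  have kc: "\<And>z. g z \<Longrightarrow> c x x0 \<le> c x z" using key_cost[OF om gl] by blast
  have br1: "if g x \<or> \<not> (\<exists>x'. is_maximizer c g x x' \<and> g x')
          then D x = x
          else is_maximizer c g x (D x) \<and> g (D x)"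
    using br unfolding best_response_def by blast
  show ?thesis
  proof (cases "g x")
    case True
    hence "l x \<ge> l x0" using gl by auto
    hence "c x x0 = 0" using om nn[of x x0] unfolding outcome_monotonic_def by (meson not_less order_antisym_conv)
    thus ?thesis using br1 True by auto
  next
    case False
    show ?thesis
    proof (cases "c x x0 \<le> 1")
      case True
      have "is_maximizer c g x x0"
        unfolding is_maximizer_def utility_def
      proof
        fix z show "of_bool (g z) - c x z \<le> of_bool (g x0) - c x x0"
          using kc[of z] nn[of x z] g0 True by (cases "g z") auto
      qed
      hence "is_maximizer c g x (D x) \<and> g (D x)" using br1 False g0 by (auto split: if_splits)
      thus ?thesis using True by auto
    next
      case c1: False
      have "\<not> (\<exists>x'. is_maximizer c g x x' \<and> g x')"
      proof
        assume "\<exists>x'. is_maximizer c g x x' \<and> g x'"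
        then obtain z where z: "is_maximizer c g x z" "g z" by blast
        hence "utility c g x x \<le> utility c g x z" unfolding is_maximizer_def by blast
        moreover have "c x x = 0" using self_cost[OF om] .
        ultimately show False using kc[OF z(2)] c1 False z(2) unfolding utility_def by auto
      qed
      hence "D x = x" using br1 by auto
      thus ?thesis using False c1 by auto
    qed
  qed
qed

theorem mainTheorem2:
  fixes M :: "'w measure" and S :: "'x measure"
    and X :: "'w \<Rightarrow> 'x" and Y :: "'w \<Rightarrow> bool"
    and l :: "'x \<Rightarrow> real" and c :: "'x \<Rightarrow> 'x \<Rightarrow> real" and f :: "'x \<Rightarrow> bool"
  assumes "prob_space M"
    and "X \<in> measurable M S"
    and "Y \<in> measurable M (count_space UNIV)"
    and "outcome_likelihood M S X Y l"
    and "\<forall>x. l x > 0"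
    and "outcome_monotonic l c"
    and "\<exists>x. f x \<and> l x = tau l f"
  shows "(\<forall>\<Delta> \<Delta>'. best_response c f \<Delta> \<and> best_response c (threshold_classifier l (tau l f)) \<Delta>'
            \<longrightarrow> strategic_utility M X Y f \<Delta>
                = strategic_utility M X Y (threshold_classifier l (tau l f)) \<Delta>')
         \<and> social_burden M X Y c f = social_burden M X Y c (threshold_classifier l (tau l f))"
proof -
  obtain x0 where x0: "f x0" "l x0 = tau l f" using assms(7) by blast
  have bdd: "bdd_below (l ` {x. f x})" using assms(5) by (meson bdd_belowI2 less_imp_le)
  have fl: "\<And>z. f z \<Longrightarrow> l z \<ge> l x0"
    using x0(2) cInf_lower[OF _ bdd] unfolding tau_def by auto
  let ?g = "threshold_classifier l (tau l f)"
  have g0: "?g x0" using x0 unfolding threshold_classifier_def by auto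
  have gl: "\<And>z. ?g z \<Longrightarrow> l z \<ge> l x0" using x0 unfolding threshold_classifier_def by auto
  show ?thesis
  proof (intro conjI allI impI)
    fix D D' assume "best_response c f D \<and> best_response c ?g D'"
    hence "\<And>x. f (D x) = ?g (D' x)"
      using accept_iff[where g=f, OF assms(6) x0(1) fl] accept_iff[where g="?g", OF assms(6) g0 gl] by blast
    thus "strategic_utility M X Y f D = strategic_utility M X Y ?g D'"
      unfolding strategic_utility_def by simp
  next
    have "\<And>x. individual_burden c f x = individual_burden c ?g x"
      using burden_eq[where g=f, OF assms(6) x0(1) fl] burden_eq[where g="?g", OF assms(6) g0 gl] by simp
    thus "social_burden M X Y c f = social_burden M X Y c ?g"
      unfolding social_burden_def by simp
  qed
qed

end
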